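(* Let $K$ be a Kleene algebra and $u,x,v\in K$. If $y\ge (x+uyv)^*$ has a least solution $N$ in $K$, then $N=(x+uNv)^*$ and $N$ is the least solution of $y\ge 1+x+uyv+yy$. If $y\ge 1+x+uyv+yy$ has a least solution $D$ in $K$, then $D=1+x+uDv+DD$ and $D$ is the least solution of $y\ge (x+uyv)^*$.
   Context: A Kleene algebra is an idempotent semiring $(K,+,\cdot,0,1)$ with a unary operation $^*$ such that for all $a,b$: $aa^*+1\le a^*$, $a^*a+1\le a^*$, and for all $x$, $ax+b\le x$ implies $a^*b\le x$, and $xa+b\le x$ implies $ba^*\le x$; here $a\le b$ iff $a+b=b$. *)

theory Defs
  imports Main
begin

class star_op =
  fixes star :: "'a \<Rightarrow> 'a"

class kleene_algebra = semiring_1 + order + star_op +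
  assumes add_idem: "x + x = x"
  and less_eq_def: "x \<le> y \<longleftrightarrow> x + y = y"
  and less_def: "x < y \<longleftrightarrow> x \<le> y \<and> x \<noteq> y"
  and star_unfoldl: "a * star a + 1 \<le> star a"
  and star_unfoldr: "star a * a + 1 \<le> star a"
  and star_inductl: "a * x + b \<le> x \<Longrightarrow> star a * b \<le> x"
  and star_inductr: "x * a + b \<le> x \<Longrightarrow> b * star a \<le> x"

definition (in order) least_solution :: "('a \<Rightarrow> 'a) \<Rightarrow> 'a \<Rightarrow> bool" where
  "least_solution f N \<longleftrightarrow> f N \<le> N \<and> (\<forall>y. f y \<le> y \<longrightarrow> N \<le> y)"

end

theory Submission
  imports Defs
begin

context kleene_algebra
begin

lemma ka_add_lub: "a + b \<le> c \<longleftrightarrow> a \<le> c \<and> b \<le> c"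
proof
  assume h: "a + b \<le> c"
  then have e: "a + b + c = c" by (simp add: less_eq_def)
  have "a + c = a + (a + b + c)" using e by simp
  also have "\<dots> = a + b + c" by (metis add.assoc add_idem)
  finally have 1: "a \<le> c" using e by (simp add: less_eq_def)
  have "b + c = b + (a + b + c)" using e by simp
  also have "\<dots> = a + b + c" by (metis add.assoc add.commute add_idem)
  finally have 2: "b \<le> c" using e by (simp add: less_eq_def)
  show "a \<le> c \<and> b \<le> c" using 1 2 by simp
next
  assume "a \<le> c \<and> b \<le> c"
  then have "a + c = c" "b + c = c" by (simp_all add: less_eq_def)
  then show "a + b \<le> c" by (metis add.assoc less_eq_def)
qed

lemma ka_add_mono: "a \<le> b \<Longrightarrow> c \<le> d \<Longrightarrow> a + c \<le> b + d"
  by (metis ka_add_lub order_refl order_trans add.commute)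

lemma ka_mult_monol: "a \<le> b \<Longrightarrow> c * a \<le> c * b"
  by (metis distrib_left less_eq_def)

lemma ka_mult_monor: "a \<le> b \<Longrightarrow> a * c \<le> b * c"
  by (metis distrib_right less_eq_def)

lemma ka_mult_mono: "a \<le> b \<Longrightarrow> c \<le> d \<Longrightarrow> a * c \<le> b * d"
  by (meson ka_mult_monol ka_mult_monor order_trans)

lemma ka_star_mono: "a \<le> b \<Longrightarrow> star a \<le> star b"
proof -
  assume "a \<le> b"
  then have "a * star b + 1 \<le> b * star b + 1" by (simp add: ka_add_mono ka_mult_monor)
  also have "\<dots> \<le> star b" by (rule star_unfoldl)
  finally show ?thesis using star_inductl[of a "star b" 1] by simp
qed

lemma ka_star_trans: "star a * star a \<le> star a"
proof -
  have "a * star a + star a \<le> star a"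
    using star_unfoldl[of a] by (simp add: ka_add_lub)
  then show ?thesis by (rule star_inductl)
qed

lemma ka_star_ext: "a \<le> star a"
proof -
  have "a * star a \<le> star a" "1 \<le> star a" using star_unfoldl[of a] by (simp_all add: ka_add_lub)
  have "a * 1 \<le> a * star a" using \<open>1 \<le> star a\<close> by (rule ka_mult_monol)
  then show ?thesis using \<open>a * star a \<le> star a\<close> by (metis mult_1_right order_trans)
qed

lemma ka_star_closed: "1 + z + star z * star z \<le> star z"
  using star_unfoldl[of z] ka_star_trans[of z] ka_star_ext[of z] by (simp add: ka_add_lub)

lemma ka_star_least: "1 + z + y * y \<le> y \<Longrightarrow> star z \<le> y"
proof -
  assume h: "1 + z + y * y \<le> y"
  then have "z \<le> y" "y * y \<le> y" "1 \<le> y" by (simp_all add: ka_add_lub)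
  then have "z * y \<le> y" by (meson ka_mult_monor order_trans)
  then have "z * y + 1 \<le> y" using \<open>1 \<le> y\<close> by (simp add: ka_add_lub)
  then show ?thesis using star_inductl[of z y 1] by simp
qed

end

theorem proposition5:
  fixes u x v N D :: "'a::kleene_algebra"
  shows "(least_solution (\<lambda>y. star (x + u * y * v)) N \<longrightarrow>
            N = star (x + u * N * v) \<and>
            least_solution (\<lambda>y. 1 + x + u * y * v + y * y) N)
       \<and> (least_solution (\<lambda>y. 1 + x + u * y * v + y * y) D \<longrightarrow>
            D = 1 + x + u * D * v + D * D \<and>
            least_solution (\<lambda>y. star (x + u * y * v)) D)"
proof -
  define f where "f = (\<lambda>y::'a. star (x + u * y * v))"
  define g where "g = (\<lambda>y::'a. 1 + x + u * y * v + y * y)"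
  have fm: "a \<le> b \<Longrightarrow> f a \<le> f b" for a b
    unfolding f_def by (intro ka_star_mono ka_add_mono order_refl ka_mult_mono)
  have gm: "a \<le> b \<Longrightarrow> g a \<le> g b" for a b
    unfolding g_def by (intro ka_add_mono order_refl ka_mult_mono)
  have gf: "g y \<le> y \<Longrightarrow> f y \<le> y" for y
  proof -
    assume h: "g y \<le> y"
    then have "1 + (x + u * y * v) + y * y \<le> y"
      unfolding g_def by (simp add: add.assoc)
    then show ?thesis unfolding f_def by (rule ka_star_least)
  qed
  have fg: "g (f y) \<le> f y" if "f y \<le> y" for y
  proof -
    have "u * f y * v \<le> u * y * v" using that by (intro ka_mult_mono order_refl)
    then have "1 + x + u * f y * v + f y * f y \<le> 1 + (x + u * y * v) + f y * f y"
      by (simp add: add.assoc ka_add_mono)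
    also have "\<dots> \<le> f y" unfolding f_def by (rule ka_star_closed)
    finally show ?thesis unfolding g_def .
  qed
  have P1: "least_solution f N \<longrightarrow> N = f N \<and> least_solution g N"
  proof
    assume L: "least_solution f N"
    then have a: "f N \<le> N" and b: "\<And>y. f y \<le> y \<Longrightarrow> N \<le> y"
      by (auto simp: least_solution_def)
    have "f (f N) \<le> f N" using fm[OF a] .
    then have "N \<le> f N" by (rule b)
    then have e: "N = f N" using a by simp
    have "g N \<le> N" using fg[OF a] e by simp
    moreover have "\<And>y. g y \<le> y \<Longrightarrow> N \<le> y" using gf b by blast
    ultimately show "N = f N \<and> least_solution g N" using e by (simp add: least_solution_def)
  qed
  have P2: "least_solution g D \<longrightarrow> D = g D \<and> least_solution f D"
  proof
    assume L: "least_solution g D"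
    then have a: "g D \<le> D" and b: "\<And>y. g y \<le> y \<Longrightarrow> D \<le> y"
      by (auto simp: least_solution_def)
    have "g (g D) \<le> g D" using gm[OF a] .
    then have "D \<le> g D" by (rule b)
    then have e: "D = g D" using a by simp
    have "f D \<le> D" using gf[OF a] .
    moreover have "D \<le> y" if "f y \<le> y" for y
      using b[OF fg[OF that]] that by simp
    ultimately show "D = g D \<and> least_solution f D" using e by (simp add: least_solution_def)
  qed
  show ?thesis using P1 P2 unfolding f_def g_def by simp
qed

end
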